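(* Let $\mathcal{H}$ be a Hilbert space of dimension $d$ with $2\le d<\infty$ and let $\mathbf{W}=\{W_y:y\in Y\}$ be a unitary system on $\mathcal{H}$. (i) There is a unique maximal family $\mathcal{V}_{\mathbf{W}}=\{\mathbf{V}_\alpha:\alpha\in\Lambda\}$ of $\mathbf{W}$-MASS's such that $\mathbf{W}=\bigcup_{\alpha\in\Lambda}\mathbf{V}_\alpha$. If each $W_y$ in $\mathbf{W}$ has simple eigenvalues, then the $\mathbf{V}_\alpha$'s are mutually disjoint. (ii) Let $\mathbf{W}'$ be another unitary system on $\mathcal{H}$ and $\mathcal{V}_{\mathbf{W}'}=\{\mathbf{V}'_\beta:\beta\in\Lambda'\}$ the corresponding family of $\mathbf{W}'$-MASS's as in (i). Then for a unitary $V$ on $\mathcal{H}$, $\mathbf{W}$ is collectively unitarily equivalent to $\mathbf{W}'$ via $V$ if and only if there is a bijection $\alpha\mapsto\alpha'$ from $\Lambda$ onto $\Lambda'$ such that $\mathbf{V}_\alpha$ is collectively unitarily equivalent to $\mathbf{V}'_{\alpha'}$ via $V$ for every $\alpha\in\Lambda$.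
   Context: A unitary system (US) on $\mathcal{H}$ is a nonempty set $\mathbf{W}=\{W_y:y\in Y\}$ of unitary operators on $\mathcal{H}$ with $\operatorname{tr}W_y=0$ and $\operatorname{tr}(W_x^*W_y)=d\,\delta_{xy}$ for $x,y\in Y$. An abelian unitary system (AUS) is a unitary system whose members pairwise commute. A maximal abelian subsystem of $\mathbf{W}$ ($\mathbf{W}$-MASS) is a subset of $\mathbf{W}$ which is an AUS and is maximal (under inclusion) with this property. For sets $\mathcal{F},\mathcal{G}$ of operators on $\mathcal{H}$ and a unitary $V$, $\mathcal{F}$ is collectively unitarily equivalent to $\mathcal{G}$ via $V$ if $\mathcal{G}=\{V^*AV: A\in\mathcal{F}\}$. *)

theory Defs
  imports "Jordan_Normal_Form.Schur_Decomposition" "Jordan_Normal_Form.Char_Poly"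
begin

text \<open>Operators on the d-dimensional Hilbert space are complex d x d matrices
 (carrier_mat d d).  The adjoint is mat_adjoint.\<close>

definition mtrace :: "complex mat \<Rightarrow> complex" where
  "mtrace A = (\<Sum>i<dim_row A. A $$ (i, i))"

definition unitary_op :: "nat \<Rightarrow> complex mat \<Rightarrow> bool" where
  "unitary_op d U \<longleftrightarrow> U \<in> carrier_mat d d \<and> mat_adjoint U * U = 1\<^sub>m d \<and> U * mat_adjoint U = 1\<^sub>m d"

text \<open>A unitary system, given as the set of its members (the indexing y \<mapsto> W_y is
 necessarily injective because tr(W_y^* W_y) = d \<noteq> 0).\<close>
definition unitary_system :: "nat \<Rightarrow> complex mat set \<Rightarrow> bool" where
  "unitary_system d W \<longleftrightarrow> W \<noteq> {} \<and>
     (\<forall>U\<in>W. unitary_op d U \<and> mtrace U = 0) \<and>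
     (\<forall>A\<in>W. \<forall>B\<in>W. mtrace (mat_adjoint A * B) = (if A = B then of_nat d else 0))"

definition abelian_unitary_system :: "nat \<Rightarrow> complex mat set \<Rightarrow> bool" where
  "abelian_unitary_system d W \<longleftrightarrow> unitary_system d W \<and> (\<forall>A\<in>W. \<forall>B\<in>W. A * B = B * A)"

definition is_MASS :: "nat \<Rightarrow> complex mat set \<Rightarrow> complex mat set \<Rightarrow> bool" where
  "is_MASS d W V \<longleftrightarrow> V \<subseteq> W \<and> abelian_unitary_system d V \<and>
     (\<forall>V'. V \<subseteq> V' \<and> V' \<subseteq> W \<and> abelian_unitary_system d V' \<longrightarrow> V' = V)"

definition maximal_MASS_family :: "nat \<Rightarrow> complex mat set \<Rightarrow> complex mat set set \<Rightarrow> bool" where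
  "maximal_MASS_family d W F \<longleftrightarrow>
     (\<forall>V\<in>F. is_MASS d W V) \<and> \<Union>F = W \<and>
     (\<forall>G. (\<forall>V\<in>G. is_MASS d W V) \<and> \<Union>G = W \<and> F \<subseteq> G \<longrightarrow> G = F)"

text \<open>The family V_W of (i) (the unique maximal one).\<close>
definition MASS_family :: "nat \<Rightarrow> complex mat set \<Rightarrow> complex mat set set" where
  "MASS_family d W = (THE F. maximal_MASS_family d W F)"

definition coll_unit_equiv_via :: "complex mat set \<Rightarrow> complex mat set \<Rightarrow> complex mat \<Rightarrow> bool" where
  "coll_unit_equiv_via F G V \<longleftrightarrow> G = (\<lambda>A. mat_adjoint V * A * V) ` F"

definition simple_eigenvalues :: "complex mat \<Rightarrow> bool" where
  "simple_eigenvalues A \<longleftrightarrow> (\<forall>c. order c (char_poly A) \<le> 1)"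

end

theory Submission imports Defs "Jordan_Normal_Form.Jordan_Normal_Form_Existence" "HOL-Library.Multiset"
begin

lemma comm_diag:
  fixes f :: "nat \<Rightarrow> complex"
  assumes inj: "inj_on f {..<n}" and X: "X \<in> carrier_mat n n"
    and c: "X * mat_diag n f = mat_diag n f * X"
  shows "X = mat_diag n (\<lambda>i. X $$ (i,i))"
proof (rule eq_matI)
  fix i j assume i: "i < dim_row (mat_diag n (\<lambda>i. X $$ (i,i)))" and j: "j < dim_col (mat_diag n (\<lambda>i. X $$ (i,i)))"
  hence i: "i < n" and j: "j < n" by (auto simp: mat_diag_def)
  have "(X * mat_diag n f) $$ (i,j) = (mat_diag n f * X) $$ (i,j)" using c by simp
  hence e: "X $$ (i,j) * f j = f i * X $$ (i,j)"
    using i j X by (simp add: mat_diag_mult_left[OF X] mat_diag_mult_right[OF X])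
  show "X $$ (i,j) = mat_diag n (\<lambda>i. X $$ (i,i)) $$ (i,j)"
  proof (cases "i = j")
    case True thus ?thesis using i by (simp add: mat_diag_def)
  next
    case False
    hence "f i \<noteq> f j" using inj i j by (auto dest: inj_onD)
    have "X $$ (i,j) * (f j - f i) = 0" using e by (simp add: algebra_simps)
    hence "X $$ (i,j) = 0" using \<open>f i \<noteq> f j\<close> by simp
    thus ?thesis using i j False by (simp add: mat_diag_def)
  qed
qed (use X in \<open>auto simp: mat_diag_def\<close>)

lemma jordan_matrix_ones:
  "jordan_matrix (map (\<lambda>a. (1::nat,a)) es) = mat_diag (length es) (\<lambda>i. es ! i)"
proof (induct es)
  case Nil
  show ?case by (rule eq_matI, auto simp: mat_diag_def)
next
  case (Cons a es)
  have s: "sum_list (map fst (map (\<lambda>a. (1::nat,a)) es)) = length es" by (induct es, auto)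
  show ?case unfolding list.map jordan_matrix_Cons Cons s
    by (rule eq_matI, auto simp: mat_diag_def nth_Cons')
qed

lemma comm_simple:
  fixes U X Y :: "complex mat"
  assumes U: "U \<in> carrier_mat n n" and s: "simple_eigenvalues U"
    and X: "X \<in> carrier_mat n n" and Y: "Y \<in> carrier_mat n n"
    and XU: "X * U = U * X" and YU: "Y * U = U * Y"
  shows "X * Y = Y * X"
proof -
  from char_poly_factorized[OF U] obtain as where cp: "char_poly U = (\<Prod>a\<leftarrow>as. [:- a, 1:])" by auto
  from jordan_nf_exists[OF U cp] obtain n_as where jnf: "jordan_nf U n_as" by auto
  have sz: "\<And>k a. (k,a) \<in> set n_as \<Longrightarrow> k = 1"
  proof -
    fix k a assume m: "(k,a) \<in> set n_as"
    have "k \<le> 1" using jordan_nf_block_size_order_bound[OF jnf m] s unfolding simple_eigenvalues_def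
      by (meson le_trans)
    moreover have "k \<noteq> 0" using jnf m unfolding jordan_nf_def by force
    ultimately show "k = 1" by simp
  qed
  define es where "es = map snd n_as"
  have nas: "n_as = map (\<lambda>a. (1,a)) es" unfolding es_def using sz
    by (induct n_as, auto)
  have "\<And>a. count (mset es) a \<le> 1"
  proof -
    fix a
    have "order a (char_poly U) = sum_list (map fst (filter (\<lambda>na. snd na = a) (map (\<lambda>a. (1::nat,a)) es)))"
      using jordan_nf_order[OF jnf] nas by metis
    also have "\<dots> = count (mset es) a" by (induct es, auto)
    finally show "count (mset es) a \<le> 1" using s unfolding simple_eigenvalues_def by metis
  qed
  hence "\<forall>a. count (mset es) a = (if a \<in> set es then 1 else 0)"
  proof (intro allI)
    fix a
    assume le: "\<And>a. count (mset es) a \<le> 1"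
    show "count (mset es) a = (if a \<in> set es then 1 else 0)"
    proof (cases "a \<in> set es")
      case True
      hence c0: "count (mset es) a \<noteq> 0" by simp
      have "count (mset es) a = 1" using c0 le[of a] by linarith
      thus ?thesis using True by simp
    next
      case False thus ?thesis by simp
    qed
  qed
  hence dist: "distinct es" unfolding distinct_count_atmost_1 .
  define m where "m = length es"
  define J where "J = mat_diag m (\<lambda>i. es ! i)"
  have injf: "inj_on (\<lambda>i. es ! i) {..<m}" using dist unfolding m_def
    by (simp add: inj_on_def nth_eq_iff_index_eq)
  have "similar_mat U J" using jnf unfolding jordan_nf_def nas J_def m_def jordan_matrix_ones by simp
  from similar_matD[OF this] obtain k P Q where cr: "{U,J,P,Q} \<subseteq> carrier_mat k k"
    and PQ: "P * Q = 1\<^sub>m k" and QP: "Q * P = 1\<^sub>m k" and UJ: "U = P * J * Q" by blast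
  have kn: "k = n" using cr U by auto
  have km: "m = n" using cr kn unfolding J_def by (auto simp: mat_diag_def)
  have P: "P \<in> carrier_mat n n" and Q: "Q \<in> carrier_mat n n" and J: "J \<in> carrier_mat n n"
    using cr kn by auto
  define X' where "X' = Q * X * P"
  define Y' where "Y' = Q * Y * P"
  have X': "X' \<in> carrier_mat n n" and Y': "Y' \<in> carrier_mat n n" unfolding X'_def Y'_def using P Q X Y by auto
  have JQUP: "J = Q * U * P"
  proof -
    have "Q * U * P = (Q * P) * J * (Q * P)" unfolding UJ using P Q J
      by (simp add: assoc_mult_mat[of _ n n _ n _ n])
    thus ?thesis using QP kn J by simp
  qed
  have comm: "\<And>Z. Z \<in> carrier_mat n n \<Longrightarrow> Z * U = U * Z \<Longrightarrow> (Q * Z * P) * J = J * (Q * Z * P)"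
  proof -
    fix Z :: "complex mat" assume Z: "Z \<in> carrier_mat n n" and ZU: "Z * U = U * Z"
    have "(Q * Z * P) * J = Q * (Z * (P * Q) * U) * P" unfolding JQUP using P Q Z U
      by (simp add: assoc_mult_mat[of _ n n _ n _ n])
    also have "\<dots> = Q * (Z * U) * P" using PQ kn Z by simp
    also have "\<dots> = Q * (U * Z) * P" using ZU by simp
    also have "\<dots> = Q * (U * (P * Q) * Z) * P" using PQ kn U by simp
    also have "\<dots> = J * (Q * Z * P)" unfolding JQUP using P Q Z U
      by (simp add: assoc_mult_mat[of _ n n _ n _ n])
    finally show "(Q * Z * P) * J = J * (Q * Z * P)" .
  qed
  have dX: "X' = mat_diag n (\<lambda>i. X' $$ (i,i))"
    using comm_diag[OF injf[unfolded km] X'] comm[OF X XU] unfolding X'_def J_def km by simp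
  have dY: "Y' = mat_diag n (\<lambda>i. Y' $$ (i,i))"
    using comm_diag[OF injf[unfolded km] Y'] comm[OF Y YU] unfolding Y'_def J_def km by simp
  have XYc: "X' * Y' = Y' * X'" by (subst dX, subst dY, subst dX, subst dY, simp add: mult.commute)
  have bk: "\<And>Z. Z \<in> carrier_mat n n \<Longrightarrow> P * (Q * Z * P) * Q = Z"
  proof -
    fix Z :: "complex mat" assume Z: "Z \<in> carrier_mat n n"
    have "P * (Q * Z * P) * Q = (P * Q) * Z * (P * Q)" using P Q Z
      by (simp add: assoc_mult_mat[of _ n n _ n _ n])
    thus "P * (Q * Z * P) * Q = Z" using PQ kn Z by simp
  qed
  have "X * Y = P * (X' * Y') * Q"
  proof -
    have "P * (X' * Y') * Q = P * X' * (Q * P) * Y' * Q" using QP kn P Q X' Y'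
      by (simp add: assoc_mult_mat[of _ n n _ n _ n])
    also have "\<dots> = (P * X' * Q) * (P * Y' * Q)" using P Q X' Y'
      by (simp add: assoc_mult_mat[of _ n n _ n _ n])
    also have "\<dots> = X * Y" using bk[OF X] bk[OF Y] unfolding X'_def Y'_def by simp
    finally show ?thesis by simp
  qed
  also have "\<dots> = P * (Y' * X') * Q" using XYc by simp
  also have "\<dots> = Y * X"
  proof -
    have "P * (Y' * X') * Q = P * Y' * (Q * P) * X' * Q" using QP kn P Q X' Y'
      by (simp add: assoc_mult_mat[of _ n n _ n _ n])
    also have "\<dots> = (P * Y' * Q) * (P * X' * Q)" using P Q X' Y'
      by (simp add: assoc_mult_mat[of _ n n _ n _ n])
    also have "\<dots> = Y * X" using bk[OF X] bk[OF Y] unfolding X'_def Y'_def by simp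
    finally show ?thesis .
  qed
  finally show ?thesis .
qed


definition commuting :: "complex mat set \<Rightarrow> bool" where
  "commuting S \<longleftrightarrow> (\<forall>A\<in>S. \<forall>B\<in>S. A * B = B * A)"

lemma aus_iff:
  assumes W: "unitary_system d W" and S: "S \<subseteq> W"
  shows "abelian_unitary_system d S \<longleftrightarrow> S \<noteq> {} \<and> commuting S"
  using W S unfolding abelian_unitary_system_def unitary_system_def commuting_def by blast

lemma mass_iff:
  assumes W: "unitary_system d W"
  shows "is_MASS d W S \<longleftrightarrow> S \<subseteq> W \<and> S \<noteq> {} \<and> commuting S \<and>
     (\<forall>S'. S \<subseteq> S' \<and> S' \<subseteq> W \<and> commuting S' \<longrightarrow> S' = S)"
  unfolding is_MASS_def using aus_iff[OF W] by blast

lemma exists_mass: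
  assumes W: "unitary_system d W" and U: "U \<in> W"
  shows "\<exists>S. is_MASS d W S \<and> U \<in> S"
proof -
  define A where "A = {S. U \<in> S \<and> S \<subseteq> W \<and> commuting S}"
  have "\<exists>M\<in>A. \<forall>X\<in>A. M \<subseteq> X \<longrightarrow> X = M"
  proof (rule subset_Zorn)
    fix C assume C: "subset.chain A C"
    show "\<exists>Z\<in>A. \<forall>X\<in>C. X \<subseteq> Z"
    proof (cases "C = {}")
      case True
      have "{U} \<in> A" unfolding A_def commuting_def using U by auto
      thus ?thesis using True by blast
    next
      case False
      have "\<Union>C \<in> A"
      proof -
        have CA: "C \<subseteq> A" using C unfolding subset.chain_def by blast
        have "commuting (\<Union>C)" unfolding commuting_def
        proof (intro ballI)
          fix X Y assume "X \<in> \<Union>C" "Y \<in> \<Union>C"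
          then obtain S1 S2 where s: "S1 \<in> C" "S2 \<in> C" "X \<in> S1" "Y \<in> S2" by blast
          have "S1 \<subseteq> S2 \<or> S2 \<subseteq> S1" using C s unfolding subset.chain_def by blast
          moreover have "commuting S1" "commuting S2" using CA s unfolding A_def by auto
          ultimately show "X * Y = Y * X" using s unfolding commuting_def by blast
        qed
        thus ?thesis using CA False unfolding A_def by auto
      qed
      thus ?thesis by blast
    qed
  qed
  then obtain M where M: "M \<in> A" and max: "\<forall>X\<in>A. M \<subseteq> X \<longrightarrow> X = M" by blast
  have "is_MASS d W M"
    unfolding mass_iff[OF W] using M max unfolding A_def by blast
  thus ?thesis using M unfolding A_def by blast
qed

lemma maxfam_iff:
  assumes W: "unitary_system d W"
  shows "maximal_MASS_family d W F \<longleftrightarrow> F = {S. is_MASS d W S}"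
proof
  assume F: "maximal_MASS_family d W F"
  let ?G = "F \<union> {S. is_MASS d W S}"
  have "\<Union>{S. is_MASS d W S} \<subseteq> W" unfolding is_MASS_def by blast
  hence "(\<forall>V\<in>?G. is_MASS d W V) \<and> \<Union>?G = W \<and> F \<subseteq> ?G"
    using F unfolding maximal_MASS_family_def by blast
  hence "?G = F" using F unfolding maximal_MASS_family_def by blast
  thus "F = {S. is_MASS d W S}" using F unfolding maximal_MASS_family_def by blast
next
  assume F: "F = {S. is_MASS d W S}"
  have "\<Union>F = W"
  proof
    show "\<Union>F \<subseteq> W" unfolding F is_MASS_def by blast
    show "W \<subseteq> \<Union>F" using exists_mass[OF W] unfolding F by blast
  qed
  thus "maximal_MASS_family d W F" unfolding maximal_MASS_family_def F by blast
qed

lemma MASS_family_eq: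
  assumes W: "unitary_system d W"
  shows "MASS_family d W = {S. is_MASS d W S}"
  unfolding MASS_family_def maxfam_iff[OF W] by simp

lemma carrier_W: "unitary_system d W \<Longrightarrow> W \<subseteq> carrier_mat d d"
  unfolding unitary_system_def unitary_op_def by blast

lemma mass_map:
  assumes W: "unitary_system d W" and W2: "unitary_system d (\<phi> ` W)"
    and Wc: "W \<subseteq> carrier_mat d d"
    and inj: "inj_on \<phi> (carrier_mat d d)"
    and mult: "\<And>A B. A \<in> carrier_mat d d \<Longrightarrow> B \<in> carrier_mat d d \<Longrightarrow> \<phi> (A * B) = \<phi> A * \<phi> B"
    and cl: "\<And>A. A \<in> carrier_mat d d \<Longrightarrow> A * A \<in> carrier_mat d d"
    and M: "is_MASS d W S"
  shows "is_MASS d (\<phi> ` W) (\<phi> ` S)"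
proof -
  have injW: "inj_on \<phi> W" using inj Wc by (rule inj_on_subset)
  have key: "\<And>A B. A \<in> W \<Longrightarrow> B \<in> W \<Longrightarrow> \<phi> A * \<phi> B = \<phi> B * \<phi> A \<longleftrightarrow> A * B = B * A"
  proof -
    fix A B assume A: "A \<in> W" and B: "B \<in> W"
    have Ac: "A \<in> carrier_mat d d" and Bc: "B \<in> carrier_mat d d" using A B Wc by auto
    have "\<phi> A * \<phi> B = \<phi> B * \<phi> A \<longleftrightarrow> \<phi> (A * B) = \<phi> (B * A)" using mult Ac Bc by simp
    also have "\<dots> \<longleftrightarrow> A * B = B * A"
      using inj_onD[OF inj] Ac Bc by (metis mult_carrier_mat)
    finally show "\<phi> A * \<phi> B = \<phi> B * \<phi> A \<longleftrightarrow> A * B = B * A" .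
  qed
  have comm_iff: "\<And>T. T \<subseteq> W \<Longrightarrow> commuting (\<phi> ` T) \<longleftrightarrow> commuting T"
    unfolding commuting_def using key by blast
  from M[unfolded mass_iff[OF W]] have
    SW: "S \<subseteq> W" and Sne: "S \<noteq> {}" and Sc: "commuting S"
    and Smax: "\<And>S'. S \<subseteq> S' \<Longrightarrow> S' \<subseteq> W \<Longrightarrow> commuting S' \<Longrightarrow> S' = S" by auto
  show ?thesis unfolding mass_iff[OF W2]
  proof (intro conjI allI impI)
    show "\<phi> ` S \<subseteq> \<phi> ` W" using SW by blast
    show "\<phi> ` S \<noteq> {}" using Sne by blast
    show "commuting (\<phi> ` S)" using comm_iff[OF SW] Sc by blast
    fix S' assume a: "\<phi> ` S \<subseteq> S' \<and> S' \<subseteq> \<phi> ` W \<and> commuting S'"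
    define T where "T = {A\<in>W. \<phi> A \<in> S'}"
    have TW: "T \<subseteq> W" unfolding T_def by blast
    have S'T: "S' = \<phi> ` T" using a unfolding T_def by blast
    have ST: "S \<subseteq> T" using a SW unfolding T_def by blast
    have "commuting T" using comm_iff[OF TW] a S'T by simp
    hence "T = S" using Smax ST TW by blast
    thus "S' = \<phi> ` S" using S'T by simp
  qed
qed

theorem theorem2p8:
  fixes d :: nat and W :: "complex mat set"
  assumes "2 \<le> d" and "unitary_system d W"
  shows "(\<exists>!F. maximal_MASS_family d W F)
    \<and> ((\<forall>U\<in>W. simple_eigenvalues U) \<longrightarrow>
         (\<forall>A\<in>MASS_family d W. \<forall>B\<in>MASS_family d W. A \<noteq> B \<longrightarrow> A \<inter> B = {}))
    \<and> (\<forall>W' V. unitary_system d W' \<longrightarrow> unitary_op d V \<longrightarrow>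
         (coll_unit_equiv_via W W' V \<longleftrightarrow>
          (\<exists>f. bij_betw f (MASS_family d W) (MASS_family d W') \<and>
               (\<forall>A\<in>MASS_family d W. coll_unit_equiv_via A (f A) V))))"
proof -
  have W: "unitary_system d W" by fact
  have Wc: "W \<subseteq> carrier_mat d d" using carrier_W[OF W] .
  have MF: "MASS_family d W = {S. is_MASS d W S}" by (rule MASS_family_eq[OF W])
  have UMF: "\<And>W0. unitary_system d W0 \<Longrightarrow> \<Union>(MASS_family d W0) = W0"
    using MASS_family_eq maxfam_iff unfolding maximal_MASS_family_def by metis
  have P1: "\<exists>!F. maximal_MASS_family d W F"
    using maxfam_iff[OF W] by blast
  have P2: "(\<forall>U\<in>W. simple_eigenvalues U) \<longrightarrow>
         (\<forall>A\<in>MASS_family d W. \<forall>B\<in>MASS_family d W. A \<noteq> B \<longrightarrow> A \<inter> B = {})"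
  proof (intro impI ballI)
    fix A B assume s: "\<forall>U\<in>W. simple_eigenvalues U" and A: "A \<in> MASS_family d W"
      and B: "B \<in> MASS_family d W" and AB: "A \<noteq> B"
    show "A \<inter> B = {}"
    proof (rule ccontr)
      assume "A \<inter> B \<noteq> {}"
      then obtain U where UA: "U \<in> A" and UB: "U \<in> B" by blast
      from A[unfolded MF] have AM: "is_MASS d W A" by simp
      from B[unfolded MF] have BM: "is_MASS d W B" by simp
      from AM[unfolded mass_iff[OF W]] have AW: "A \<subseteq> W" and Ac: "commuting A"
        and Amax: "\<And>S'. A \<subseteq> S' \<Longrightarrow> S' \<subseteq> W \<Longrightarrow> commuting S' \<Longrightarrow> S' = A" by auto
      from BM[unfolded mass_iff[OF W]] have BW: "B \<subseteq> W" and Bc: "commuting B"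
        and Bmax: "\<And>S'. B \<subseteq> S' \<Longrightarrow> S' \<subseteq> W \<Longrightarrow> commuting S' \<Longrightarrow> S' = B" by auto
      have UW: "U \<in> W" using UA AW by blast
      have cU: "\<And>X. X \<in> A \<union> B \<Longrightarrow> X * U = U * X"
        using Ac Bc UA UB unfolding commuting_def by blast
      have "commuting (A \<union> B)" unfolding commuting_def
      proof (intro ballI)
        fix X Y assume X: "X \<in> A \<union> B" and Y: "Y \<in> A \<union> B"
        have Xc: "X \<in> carrier_mat d d" and Yc: "Y \<in> carrier_mat d d"
          using X Y AW BW Wc by auto
        show "X * Y = Y * X"
          by (rule comm_simple[OF _ _ Xc Yc cU[OF X] cU[OF Y]], use UW Wc s in auto)
      qed
      hence "A \<union> B = A" "A \<union> B = B" using Amax Bmax AW BW by auto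
      thus False using AB by simp
    qed
  qed
  have P3: "\<forall>W' V. unitary_system d W' \<longrightarrow> unitary_op d V \<longrightarrow>
         (coll_unit_equiv_via W W' V \<longleftrightarrow>
          (\<exists>f. bij_betw f (MASS_family d W) (MASS_family d W') \<and>
               (\<forall>A\<in>MASS_family d W. coll_unit_equiv_via A (f A) V)))"
  proof (intro allI impI)
    fix W' V assume W': "unitary_system d W'" and V: "unitary_op d V"
    have W'c: "W' \<subseteq> carrier_mat d d" using carrier_W[OF W'] .
    define Va where "Va = mat_adjoint V"
    have Vc: "V \<in> carrier_mat d d" and VaV: "Va * V = 1\<^sub>m d" and VVa: "V * Va = 1\<^sub>m d"
      using V unfolding unitary_op_def Va_def by auto
    have Vac: "Va \<in> carrier_mat d d"
    proof -
      have "dim_row (Va * V) = d" "dim_col (V * Va) = d" using VaV VVa by auto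
      thus ?thesis by auto
    qed
    define \<phi> where "\<phi> = (\<lambda>A. mat_adjoint V * A * V)"
    define \<psi> where "\<psi> = (\<lambda>A. V * A * Va)"
    have \<phi>c: "\<And>A. A \<in> carrier_mat d d \<Longrightarrow> \<phi> A \<in> carrier_mat d d"
      unfolding \<phi>_def Va_def[symmetric] using Vc Vac by auto
    have \<psi>c: "\<And>A. A \<in> carrier_mat d d \<Longrightarrow> \<psi> A \<in> carrier_mat d d"
      unfolding \<psi>_def using Vc Vac by auto
    have \<psi>\<phi>: "\<And>A. A \<in> carrier_mat d d \<Longrightarrow> \<psi> (\<phi> A) = A"
    proof -
      fix A :: "complex mat" assume A: "A \<in> carrier_mat d d"
      have "\<psi> (\<phi> A) = (V * Va) * A * (V * Va)" unfolding \<psi>_def \<phi>_def Va_def[symmetric]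
        using A Vc Vac by (simp add: assoc_mult_mat[of _ d d _ d _ d])
      thus "\<psi> (\<phi> A) = A" using VVa A by simp
    qed
    have \<phi>\<psi>: "\<And>A. A \<in> carrier_mat d d \<Longrightarrow> \<phi> (\<psi> A) = A"
    proof -
      fix A :: "complex mat" assume A: "A \<in> carrier_mat d d"
      have "\<phi> (\<psi> A) = (Va * V) * A * (Va * V)" unfolding \<psi>_def \<phi>_def Va_def[symmetric]
        using A Vc Vac by (simp add: assoc_mult_mat[of _ d d _ d _ d])
      thus "\<phi> (\<psi> A) = A" using VaV A by simp
    qed
    have \<phi>m: "\<And>A B. A \<in> carrier_mat d d \<Longrightarrow> B \<in> carrier_mat d d \<Longrightarrow> \<phi> (A * B) = \<phi> A * \<phi> B"
    proof -
      fix A B :: "complex mat" assume A: "A \<in> carrier_mat d d" and B: "B \<in> carrier_mat d d"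
      have "\<phi> A * \<phi> B = Va * A * (V * Va) * B * V" unfolding \<phi>_def Va_def[symmetric]
        using A B Vc Vac by (simp add: assoc_mult_mat[of _ d d _ d _ d])
      also have "\<dots> = \<phi> (A * B)" unfolding \<phi>_def Va_def[symmetric] using VVa A B Vc Vac
        by (simp add: assoc_mult_mat[of _ d d _ d _ d])
      finally show "\<phi> (A * B) = \<phi> A * \<phi> B" by simp
    qed
    have \<psi>m: "\<And>A B. A \<in> carrier_mat d d \<Longrightarrow> B \<in> carrier_mat d d \<Longrightarrow> \<psi> (A * B) = \<psi> A * \<psi> B"
    proof -
      fix A B :: "complex mat" assume A: "A \<in> carrier_mat d d" and B: "B \<in> carrier_mat d d"
      have "\<psi> A * \<psi> B = V * A * (Va * V) * B * Va" unfolding \<psi>_def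
        using A B Vc Vac by (simp add: assoc_mult_mat[of _ d d _ d _ d])
      also have "\<dots> = \<psi> (A * B)" unfolding \<psi>_def using VaV A B Vc Vac
        by (simp add: assoc_mult_mat[of _ d d _ d _ d])
      finally show "\<psi> (A * B) = \<psi> A * \<psi> B" by simp
    qed
    have inj\<phi>: "inj_on \<phi> (carrier_mat d d)" by (rule inj_on_inverseI[of _ \<psi>], rule \<psi>\<phi>)
    have inj\<psi>: "inj_on \<psi> (carrier_mat d d)" by (rule inj_on_inverseI[of _ \<phi>], rule \<phi>\<psi>)
    have cl: "\<And>A. A \<in> carrier_mat d d \<Longrightarrow> A * A \<in> carrier_mat d d" by auto
    have cue: "\<And>F G. coll_unit_equiv_via F G V \<longleftrightarrow> G = \<phi> ` F"
      unfolding coll_unit_equiv_via_def \<phi>_def by simp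
    show "coll_unit_equiv_via W W' V \<longleftrightarrow>
          (\<exists>f. bij_betw f (MASS_family d W) (MASS_family d W') \<and>
               (\<forall>A\<in>MASS_family d W. coll_unit_equiv_via A (f A) V))"
      unfolding cue
    proof
      assume W'eq: "W' = \<phi> ` W"
      have W2: "unitary_system d (\<phi> ` W)" using W' W'eq by simp
      have Weq: "W = \<psi> ` W'"
      proof -
        have "\<psi> ` W' = (\<psi> \<circ> \<phi>) ` W" unfolding W'eq image_comp ..
        also have "\<dots> = (\<lambda>x. x) ` W"
          by (rule image_cong[OF refl]) (use \<psi>\<phi> Wc in auto)
        also have "\<dots> = W" by simp
        finally show ?thesis by simp
      qed
      have MF': "MASS_family d W' = {S. is_MASS d W' S}" by (rule MASS_family_eq[OF W'])
      have "bij_betw (image \<phi>) (MASS_family d W) (MASS_family d W')"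
        unfolding bij_betw_def
      proof
        show "inj_on (image \<phi>) (MASS_family d W)"
        proof (rule inj_onI)
          fix A B assume A: "A \<in> MASS_family d W" and B: "B \<in> MASS_family d W" and e: "\<phi> ` A = \<phi> ` B"
          have Ac: "A \<subseteq> carrier_mat d d" and Bc: "B \<subseteq> carrier_mat d d"
            using A B Wc unfolding MF is_MASS_def by auto
          show "A = B" using inj_on_image_eq_iff[OF inj\<phi> Ac Bc] e by simp
        qed
        show "image \<phi> ` MASS_family d W = MASS_family d W'"
        proof
          show "image \<phi> ` MASS_family d W \<subseteq> MASS_family d W'"
          proof
            fix X assume "X \<in> image \<phi> ` MASS_family d W"
            then obtain A where A: "A \<in> MASS_family d W" and X: "X = \<phi> ` A" by blast
            have "is_MASS d (\<phi> ` W) (\<phi> ` A)"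
              using mass_map[OF W W2 Wc inj\<phi> \<phi>m cl] A unfolding MF by simp
            hence "X \<in> {S. is_MASS d W' S}" using W'eq X by simp
            thus "X \<in> MASS_family d W'" using MF' by simp
          qed
          show "MASS_family d W' \<subseteq> image \<phi> ` MASS_family d W"
          proof
            fix B assume B: "B \<in> MASS_family d W'"
            hence BM: "is_MASS d W' B" unfolding MF' by simp
            have W3: "unitary_system d (\<psi> ` W')" using W Weq by simp
            have "is_MASS d (\<psi> ` W') (\<psi> ` B)" by (rule mass_map[OF W' W3 W'c inj\<psi> \<psi>m cl BM])
            hence "\<psi> ` B \<in> MASS_family d W" unfolding MF Weq[symmetric] by simp
            moreover have "\<phi> ` (\<psi> ` B) = B"
            proof -
              have Bc: "B \<subseteq> carrier_mat d d" using BM W'c unfolding is_MASS_def by auto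
              have "\<phi> ` (\<psi> ` B) = (\<phi> \<circ> \<psi>) ` B" by (simp add: image_comp)
              also have "\<dots> = (\<lambda>x. x) ` B"
                by (rule image_cong[OF refl]) (use \<phi>\<psi> Bc in auto)
              also have "\<dots> = B" by simp
              finally show ?thesis .
            qed
            ultimately show "B \<in> image \<phi> ` MASS_family d W" by (rule rev_image_eqI[OF _ sym])
          qed
        qed
      qed
      thus "\<exists>f. bij_betw f (MASS_family d W) (MASS_family d W') \<and>
               (\<forall>A\<in>MASS_family d W. f A = \<phi> ` A)" by blast
    next
      assume "\<exists>f. bij_betw f (MASS_family d W) (MASS_family d W') \<and>
               (\<forall>A\<in>MASS_family d W. f A = \<phi> ` A)"
      then obtain f where bf: "bij_betw f (MASS_family d W) (MASS_family d W')"
        and fA: "\<forall>A\<in>MASS_family d W. f A = \<phi> ` A" by blast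
      have "W' = \<Union>(MASS_family d W')" using UMF[OF W'] by simp
      also have "\<dots> = \<Union>(f ` MASS_family d W)" using bf unfolding bij_betw_def by simp
      also have "\<dots> = \<Union>((\<lambda>A. \<phi> ` A) ` MASS_family d W)" using fA by simp
      also have "\<dots> = \<phi> ` \<Union>(MASS_family d W)" by blast
      also have "\<dots> = \<phi> ` W" using UMF[OF W] by simp
      finally show "W' = \<phi> ` W" .
    qed
  qed
  show ?thesis using P1 P2 P3 by blast
qed

end
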